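(* Let $\mathcal G$ be a good pseudogroup on a compact metric space $X$, let $\mathcal G_1$ be a good generating set of $\mathcal G$ and $\mathcal G_2$ the corresponding compacted generating set. Then there exists $\rho>0$ such that every Borel probability measure $\mu$ on $X$ that is $(\mathcal G,\mathcal G_2)$-weakly expansive with constant $\rho$ (i.e. $\mu(\Phi^2_\rho(x))=0$ for $\mu$-a.e. $x\in X$) is $(\mathcal G,\mathcal G_1)$-expansive with constant $\rho/2$ (i.e. $\mu(\Phi^1_{\rho/2}(x))=0$ for every $x\in X$).
   Context: $(X,d)$ is a compact metric space. $\mathrm{Homeo}(X)$ is the set of homeomorphisms $g:D_g\to R_g$ between open subsets of $X$; compositions are taken on their natural domains, $D_{h\circ g}=g^{-1}(D_h)$ (possibly empty). A pseudogroup is a set $\mathcal G\subset\mathrm{Homeo}(X)$ containing $\mathrm{id}_X$, closed under composition, inversion and restriction to open subsets of the domain, and such that if $g\in\mathrm{Homeo}(X)$ and $D_g$ has an open cover $\mathcal U$ with $g|_U\in\mathcal G$ for all $U\in\mathcal U$, then $g\in\mathcal G$. For $\Gamma\subset\mathrm{Homeo}(X)$ with $\bigcup_{g\in\Gamma}(D_g\cup R_g)=X$, the pseudogroup generated by $\Gamma$ consists of all $g\in\mathrm{Homeo}(X)$ such that each $x\in D_g$ has a neighborhood $U_x\subset D_g$ with $g|_{U_x}=g_1^{e_1}\circ\cdots\circ g_k^{e_k}|_{U_x}$ for some $g_i\in\Gamma$, $e_i\in\{\pm1\}$; $\Gamma$ generates $\mathcal G$ if this pseudogroup equals $\mathcal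 G$. $\Gamma$ is symmetric if $\mathrm{id}_X\in\Gamma$ and $g^{-1}\in\Gamma$ for all $g\in\Gamma$. A finite symmetric generating set $\mathcal G_1$ of $\mathcal G$ is good if for each $g\in\mathcal G_1$ there is a compact $K_g\subset D_g$ such that $\mathcal G_2=\{g|_{\mathrm{int}(K_g)}: g\in\mathcal G_1\}$ still generates $\mathcal G$; $\mathcal G_2$ is called the compacted generating set, and $\mathcal G$ is good if it has a good generating set. For $i=1,2$ let $\mathcal G^i_n=\{h_1\circ\cdots\circ h_n: h_j\in\mathcal G_i\}$, $\mathcal G^{i,x}_n=\{g\in\mathcal G^i_n: x\in D_g\}$ and $\Phi^i_\delta(x)=\{y\in X: d(g(x),g(y))\le\delta\ \text{for all } n\in\mathbb N \text{ and all } g\in\mathcal G^{i,x}_n\cap\mathcal G^{i,y}_n\}$ (Bowen ball). *)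

theory Defs
  imports "HOL-Probability.Probability"
begin

text \<open>Partial maps on the compact metric space X (the ambient type 'a, with UNIV compact)
  are represented as maps 'a \<Rightarrow> 'a option; the domain D_g is dom g and the range R_g is ran g.
  Composition on natural domains is map_comp, restriction is restrict_map.\<close>

definition minv :: "('a \<Rightarrow> 'a option) \<Rightarrow> ('a \<Rightarrow> 'a option)" where
  "minv g = (\<lambda>y. if y \<in> ran g then Some (THE x. g x = Some y) else None)"

definition Homeo :: "('a::topological_space \<Rightarrow> 'a option) set" where
  "Homeo = {g. open (dom g) \<and> open (ran g) \<and>
              (\<exists>f'. homeomorphism (dom g) (ran g) (\<lambda>x. the (g x)) f')}"

definition pseudogroup :: "('a::topological_space \<Rightarrow> 'a option) set \<Rightarrow> bool" where
  "pseudogroup G \<longleftrightarrow>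
     G \<subseteq> Homeo \<and> Some \<in> G \<and>
     (\<forall>g\<in>G. \<forall>h\<in>G. h \<circ>\<^sub>m g \<in> G) \<and>
     (\<forall>g\<in>G. minv g \<in> G) \<and>
     (\<forall>g\<in>G. \<forall>U. open U \<and> U \<subseteq> dom g \<longrightarrow> g |` U \<in> G) \<and>
     (\<forall>g\<in>Homeo. \<forall>\<U>. (\<forall>U\<in>\<U>. open U) \<and> \<Union>\<U> = dom g \<and> (\<forall>U\<in>\<U>. g |` U \<in> G) \<longrightarrow> g \<in> G)"

text \<open>Word g_1^{e_1} o ... o g_k^{e_k}; the boolean flag True means exponent +1, False means -1.\<close>
fun word :: "(('a \<Rightarrow> 'a option) \<times> bool) list \<Rightarrow> ('a \<Rightarrow> 'a option)" where
  "word [] = Some"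
| "word ((h, e) # ws) = (if e then h else minv h) \<circ>\<^sub>m word ws"

definition generated_pseudogroup ::
  "('a::topological_space \<Rightarrow> 'a option) set \<Rightarrow> ('a \<Rightarrow> 'a option) set" where
  "generated_pseudogroup \<Gamma> =
     {g \<in> Homeo. \<forall>x\<in>dom g. \<exists>U. open U \<and> x \<in> U \<and> U \<subseteq> dom g \<and>
        (\<exists>ws. (\<forall>(h, e)\<in>set ws. h \<in> \<Gamma>) \<and> (\<forall>y\<in>U. word ws y = g y))}"

definition generates ::
  "('a::topological_space \<Rightarrow> 'a option) set \<Rightarrow> ('a \<Rightarrow> 'a option) set \<Rightarrow> bool" where
  "generates \<Gamma> G \<longleftrightarrow> \<Gamma> \<subseteq> Homeo \<and> (\<Union>g\<in>\<Gamma>. dom g \<union> ran g) = UNIV \<and>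
                       generated_pseudogroup \<Gamma> = G"

definition symmetric_set :: "('a \<Rightarrow> 'a option) set \<Rightarrow> bool" where
  "symmetric_set \<Gamma> \<longleftrightarrow> Some \<in> \<Gamma> \<and> (\<forall>g\<in>\<Gamma>. minv g \<in> \<Gamma>)"

definition compacted :: "('a::topological_space \<Rightarrow> 'a option) set \<Rightarrow>
    (('a \<Rightarrow> 'a option) \<Rightarrow> 'a set) \<Rightarrow> ('a \<Rightarrow> 'a option) set" where
  "compacted G1 K = (\<lambda>g. g |` interior (K g)) ` G1"

definition good_generating_set :: "('a::topological_space \<Rightarrow> 'a option) set \<Rightarrow>
    (('a \<Rightarrow> 'a option) \<Rightarrow> 'a set) \<Rightarrow> ('a \<Rightarrow> 'a option) set \<Rightarrow> bool" where
  "good_generating_set G1 K G \<longleftrightarrow>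
     finite G1 \<and> symmetric_set G1 \<and> generates G1 G \<and>
     (\<forall>g\<in>G1. compact (K g) \<and> K g \<subseteq> dom g) \<and> generates (compacted G1 K) G"

definition comps :: "('a \<Rightarrow> 'a option) set \<Rightarrow> nat \<Rightarrow> ('a \<Rightarrow> 'a option) set" where
  "comps \<Gamma> n = {foldr (\<circ>\<^sub>m) hs Some | hs. length hs = n \<and> set hs \<subseteq> \<Gamma>}"

definition bowen_ball :: "('a::metric_space \<Rightarrow> 'a option) set \<Rightarrow> real \<Rightarrow> 'a \<Rightarrow> 'a set" where
  "bowen_ball \<Gamma> \<delta> x = {y. \<forall>n\<ge>1. \<forall>g\<in>comps \<Gamma> n.
       x \<in> dom g \<and> y \<in> dom g \<longrightarrow> dist (the (g x)) (the (g y)) \<le> \<delta>}"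

end

theory Submission
  imports Defs
begin

lemma sep_lemma:
  fixes K D :: "'a::metric_space set"
  assumes "compact K" "open D" "K \<subseteq> D"
  shows "\<exists>e>0. \<forall>u\<in>K. \<forall>v. dist u v < e \<longrightarrow> v \<in> D"
proof (cases "K = {} \<or> D = UNIV")
  case True then show ?thesis by (auto intro: exI[of _ 1])
next
  case False
  then have KN: "K \<noteq> {}" and DN: "- D \<noteq> {}" by auto
  have cl: "closed (- D)" using assms(2) by auto
  have "continuous_on K (\<lambda>u. infdist u (- D))"
    by (intro continuous_on_infdist continuous_on_id)
  then obtain u0 where u0: "u0 \<in> K" "\<forall>y\<in>K. infdist u0 (- D) \<le> infdist y (- D)"
    using continuous_attains_inf[OF assms(1) KN] by blast
  have pos: "infdist u0 (- D) > 0"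
    using infdist_pos_not_in_closed[OF cl DN] u0 assms(3) by auto
  show ?thesis
  proof (intro exI[of _ "infdist u0 (- D)"] conjI pos ballI allI impI)
    fix u v assume "u \<in> K" "dist u v < infdist u0 (- D)"
    show "v \<in> D"
    proof (rule ccontr)
      assume "v \<notin> D"
      then have "infdist u (- D) \<le> dist u v" by (intro infdist_le) auto
      with u0 \<open>u \<in> K\<close> \<open>dist u v < _\<close> show False by force
    qed
  qed
qed


lemma finite_min_lemma:
  assumes "finite A" "\<forall>b\<in>A. \<exists>d>0. \<forall>d'. 0 < d' \<and> d' \<le> d \<longrightarrow> P b (d'::real)"
  shows "\<exists>d>0. \<forall>b\<in>A. \<forall>d'. 0 < d' \<and> d' \<le> d \<longrightarrow> P b d'"
  using assms
proof (induction A rule: finite_induct)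
  case empty then show ?case by (auto intro: exI[of _ 1])
next
  case (insert a A)
  then obtain d where d: "d > 0" "\<forall>b\<in>A. \<forall>d'. 0 < d' \<and> d' \<le> d \<longrightarrow> P b d'" by auto
  obtain d1 where d1: "d1 > 0" "\<forall>d'. 0 < d' \<and> d' \<le> d1 \<longrightarrow> P a d'" using insert.prems by auto
  show ?case using d d1 by (intro exI[of _ "min d d1"]) auto
qed

definition cpm :: "('a::topological_space \<Rightarrow> 'a option) \<Rightarrow> bool" where
  "cpm g \<longleftrightarrow> open (dom g) \<and> continuous_on (dom g) (\<lambda>x. the (g x))"

lemma dom_mcomp: "dom (h \<circ>\<^sub>m g) = dom g \<inter> (\<lambda>x. the (g x)) -` dom h"
  by (auto simp: map_comp_def split: option.splits)

lemma cpm_comp: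
  assumes "cpm g" "cpm h" shows "cpm (h \<circ>\<^sub>m g)"
proof -
  have o: "open (dom (h \<circ>\<^sub>m g))"
    using assms unfolding cpm_def dom_mcomp
    by (metis continuous_on_open_vimage Int_commute)
  have c1: "continuous_on (dom h) (\<lambda>x. the (h x))" and c2: "continuous_on (dom (h \<circ>\<^sub>m g)) (\<lambda>x. the (g x))"
    using assms unfolding cpm_def dom_mcomp by (auto intro: continuous_on_subset)
  have c3: "(\<lambda>x. the (g x)) ` dom (h \<circ>\<^sub>m g) \<subseteq> dom h" unfolding dom_mcomp by auto
  have "continuous_on (dom (h \<circ>\<^sub>m g)) (\<lambda>x. the (h (the (g x))))"
    using continuous_on_compose2[OF c1 c2 c3] .
  moreover have "\<And>x. x \<in> dom (h \<circ>\<^sub>m g) \<Longrightarrow> the ((h \<circ>\<^sub>m g) x) = the (h (the (g x)))"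
    by (auto simp: map_comp_def split: option.splits)
  ultimately show ?thesis using o unfolding cpm_def
    using continuous_on_cong by fastforce
qed

lemma cpm_foldr: "set hs \<subseteq> {g. cpm g} \<Longrightarrow> cpm (foldr (\<circ>\<^sub>m) hs Some)"
proof (induction hs)
  case Nil then show ?case by (simp add: cpm_def continuous_on_id)
next
  case (Cons a hs) then show ?case by (simp add: cpm_comp)
qed

lemma cpm_Homeo: "g \<in> Homeo \<Longrightarrow> cpm g"
  unfolding Homeo_def cpm_def homeomorphism_def by auto

lemma cpm_restrict:
  assumes "cpm g" "open U" shows "cpm (g |` U)"
proof -
  have d: "dom (g |` U) = dom g \<inter> U" by auto
  have "continuous_on (dom g \<inter> U) (\<lambda>x. the (g x))"
    using assms unfolding cpm_def by (auto intro: continuous_on_subset)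
  moreover have "\<And>x. x \<in> dom g \<inter> U \<Longrightarrow> the ((g |` U) x) = the (g x)" by auto
  ultimately show ?thesis using assms unfolding cpm_def d
    using continuous_on_cong by (metis (no_types, lifting) open_Int)
qed

lemma bowen_closed:
  fixes \<Gamma> :: "('a::metric_space \<Rightarrow> 'a option) set"
  assumes "\<forall>g\<in>\<Gamma>. cpm g"
  shows "closed (bowen_ball \<Gamma> \<delta> y)"
proof -
  define S :: "('a \<Rightarrow> 'a option) \<Rightarrow> 'a set" where "S g = {z. y \<in> dom g \<and> z \<in> dom g \<longrightarrow> dist (the (g y)) (the (g z)) \<le> \<delta>}" for g
  have eq: "bowen_ball \<Gamma> \<delta> y = (\<Inter>g\<in>{g. \<exists>n\<ge>1. g \<in> comps \<Gamma> n}. S g)"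
    unfolding bowen_ball_def S_def by auto
  have "closed (S g)" if "\<exists>n\<ge>1. g \<in> comps \<Gamma> n" for g
  proof -
    from that obtain hs where "g = foldr (\<circ>\<^sub>m) hs Some" "set hs \<subseteq> \<Gamma>"
      unfolding comps_def by auto
    then have c: "cpm g" using cpm_foldr assms by blast
    show ?thesis
    proof (cases "y \<in> dom g")
      case False then have "S g = UNIV" unfolding S_def by auto
      then show ?thesis by simp
    next
      case True
      have "S g = - ((\<lambda>z. the (g z)) -` (- cball (the (g y)) \<delta>) \<inter> dom g)"
        unfolding S_def using True by (auto simp: dist_commute)
      moreover have "open ((\<lambda>z. the (g z)) -` (- cball (the (g y)) \<delta>) \<inter> dom g)"
        using c unfolding cpm_def using continuous_on_open_vimage by blast
      ultimately show ?thesis by (simp add: closed_def)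
    qed
  qed
  then show ?thesis unfolding eq by (intro closed_INT) auto
qed

lemma lift_list:
  "set hs \<subseteq> compacted G1 K \<Longrightarrow> \<exists>hs'. list_all2 (\<lambda>a b. b \<in> G1 \<and> a = b |` interior (K b)) hs hs'"
proof (induction hs)
  case Nil then show ?case by auto
next
  case (Cons a hs)
  then obtain hs' where "list_all2 (\<lambda>a b. b \<in> G1 \<and> a = b |` interior (K b)) hs hs'" by auto
  moreover obtain b where "b \<in> G1" "a = b |` interior (K b)" using Cons.prems unfolding compacted_def by auto
  ultimately show ?case by (intro exI[of _ "b # hs'"]) auto
qed

lemma key_lemma:
  assumes "list_all2 (\<lambda>a b. b \<in> G1 \<and> a = b |` interior (K b)) hs hs'"
    and sep: "\<forall>b\<in>G1. \<forall>u\<in>K b. \<forall>v. dist u v < e \<longrightarrow> v \<in> dom b"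
    and H: "\<forall>ls. set ls \<subseteq> G1 \<longrightarrow> x \<in> dom (foldr (\<circ>\<^sub>m) ls Some) \<longrightarrow> y \<in> dom (foldr (\<circ>\<^sub>m) ls Some)
               \<longrightarrow> dist (the (foldr (\<circ>\<^sub>m) ls Some y)) (the (foldr (\<circ>\<^sub>m) ls Some x)) < e"
    and "y \<in> dom (foldr (\<circ>\<^sub>m) hs Some)"
  shows "x \<in> dom (foldr (\<circ>\<^sub>m) hs' Some) \<and> foldr (\<circ>\<^sub>m) hs' Some y = foldr (\<circ>\<^sub>m) hs Some y"
  using assms(1,4)
proof (induction hs hs' rule: list_all2_induct)
  case Nil then show ?case by auto
next
  case (Cons a as b bs)
  define F where "F = foldr (\<circ>\<^sub>m) as Some"
  define F' where "F' = foldr (\<circ>\<^sub>m) bs Some"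
  from Cons.prems obtain u w where u: "F y = Some u" "a u = Some w"
    unfolding F_def by (auto simp: map_comp_Some_iff)
  then have "y \<in> dom F" by auto
  with Cons.IH have ih: "x \<in> dom F'" "F' y = F y" unfolding F_def F'_def by auto
  then obtain v where v: "F' x = Some v" by auto
  have sb: "set bs \<subseteq> G1" using Cons.hyps(2) by (induction rule: list_all2_induct) auto
  have "dist u v < e" using H sb ih u v unfolding F'_def by force
  moreover have uK: "u \<in> interior (K b)" "b u = Some w" using u Cons.hyps(1)
    by (auto simp: restrict_map_def split: if_splits)
  ultimately have "v \<in> dom b" using sep Cons.hyps(1) interior_subset by blast
  moreover have e1: "foldr (\<circ>\<^sub>m) (b#bs) Some = b \<circ>\<^sub>m F'" and e2: "foldr (\<circ>\<^sub>m) (a#as) Some = a \<circ>\<^sub>m F"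
    by (simp_all add: F_def F'_def)
  ultimately show ?case unfolding e1 e2 using ih u v uK Cons.hyps(1)
    by (auto simp: map_comp_def)
qed

theorem theoremA:
  fixes G G1 :: "('a::metric_space \<Rightarrow> 'a option) set"
    and K :: "('a \<Rightarrow> 'a option) \<Rightarrow> 'a set"
  assumes "compact (UNIV :: 'a set)"
    and "pseudogroup G"
    and "good_generating_set G1 K G"
  shows "\<exists>\<rho>>0. \<forall>\<mu>::'a measure.
           prob_space \<mu> \<and> sets \<mu> = sets borel \<and>
           (AE x in \<mu>. emeasure \<mu> (bowen_ball (compacted G1 K) \<rho> x) = 0)
           \<longrightarrow> (\<forall>x. emeasure \<mu> (bowen_ball G1 (\<rho> / 2) x) = 0)"
proof -
  have fin: "finite G1" and sym: "symmetric_set G1" and gen: "generates G1 G"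
    and KK: "\<forall>g\<in>G1. compact (K g) \<and> K g \<subseteq> dom g"
    using assms(3) unfolding good_generating_set_def by auto
  have homeo: "G1 \<subseteq> Homeo" using gen unfolding generates_def by auto
  have SomeG1: "Some \<in> G1" using sym unfolding symmetric_set_def by auto
  have cpm1: "\<forall>g\<in>G1. cpm g" using homeo cpm_Homeo by auto
  have cpm2: "\<forall>g\<in>compacted G1 K. cpm g"
    using cpm1 unfolding compacted_def by (auto intro: cpm_restrict)
  have "\<forall>b\<in>G1. \<exists>d>0. \<forall>d'. 0 < d' \<and> d' \<le> d \<longrightarrow> (\<forall>u\<in>K b. \<forall>v. dist u v < d' \<longrightarrow> v \<in> dom b)"
  proof
    fix b assume b: "b \<in> G1"
    then have "open (dom b)" using cpm1 unfolding cpm_def by auto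
    then obtain d where "d > 0" "\<forall>u\<in>K b. \<forall>v. dist u v < d \<longrightarrow> v \<in> dom b"
      using sep_lemma[of "K b" "dom b"] KK b by auto
    then show "\<exists>d>0. \<forall>d'. 0 < d' \<and> d' \<le> d \<longrightarrow> (\<forall>u\<in>K b. \<forall>v. dist u v < d' \<longrightarrow> v \<in> dom b)"
      by (intro exI[of _ d]) force
  qed
  from finite_min_lemma[OF fin this] obtain e where e: "e > 0"
    and sep: "\<forall>b\<in>G1. \<forall>u\<in>K b. \<forall>v. dist u v < e \<longrightarrow> v \<in> dom b" by (meson order_refl)
  define F :: "('a \<Rightarrow> 'a option) list \<Rightarrow> 'a \<Rightarrow> 'a option" where "F ls = foldr (\<circ>\<^sub>m) ls Some" for ls
  have Hz: "dist (the (F ls x)) (the (F ls z)) \<le> e / 2"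
    if z: "z \<in> bowen_ball G1 (e/2) x" and ls: "set ls \<subseteq> G1" and dx: "x \<in> dom (F ls)" and dz: "z \<in> dom (F ls)"
    for x z ls
  proof (cases "ls = []")
    case True
    have "F [Some] \<in> comps G1 1" using SomeG1 unfolding comps_def F_def by (intro CollectI exI[of _ "[Some]"]) auto
    moreover have "F [Some] = Some" by (simp add: F_def map_comp_def fun_eq_iff)
    ultimately show ?thesis using z True unfolding bowen_ball_def by (force simp: F_def)
  next
    case False
    then have "F ls \<in> comps G1 (length ls)" "length ls \<ge> 1" using ls unfolding comps_def F_def
      by (auto simp: Suc_le_eq)
    then show ?thesis using z dx dz unfolding bowen_ball_def by blast
  qed
  have sub: "z \<in> bowen_ball (compacted G1 K) e y"
    if y: "y \<in> bowen_ball G1 (e/2) x" and z: "z \<in> bowen_ball G1 (e/2) x" for x y z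
    unfolding bowen_ball_def
  proof (intro CollectI allI impI ballI)
    fix n g assume "1 \<le> n" "g \<in> comps (compacted G1 K) n" and yz: "y \<in> dom g \<and> z \<in> dom g"
    then obtain hs where g: "g = F hs" "set hs \<subseteq> compacted G1 K" unfolding comps_def F_def by auto
    then obtain hs' where R: "list_all2 (\<lambda>a b. b \<in> G1 \<and> a = b |` interior (K b)) hs hs'"
      using lift_list by blast
    have sb: "set hs' \<subseteq> G1" using R by (induction rule: list_all2_induct) auto
    have Hw: "\<forall>ls. set ls \<subseteq> G1 \<longrightarrow> x \<in> dom (foldr (\<circ>\<^sub>m) ls Some) \<longrightarrow> w \<in> dom (foldr (\<circ>\<^sub>m) ls Some)
               \<longrightarrow> dist (the (foldr (\<circ>\<^sub>m) ls Some w)) (the (foldr (\<circ>\<^sub>m) ls Some x)) < e"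
      if "w \<in> bowen_ball G1 (e/2) x" for w
    proof (intro allI impI)
      fix ls assume "set ls \<subseteq> G1" "x \<in> dom (foldr (\<circ>\<^sub>m) ls Some)" "w \<in> dom (foldr (\<circ>\<^sub>m) ls Some)"
      then have "dist (the (F ls x)) (the (F ls w)) \<le> e / 2" using Hz[OF that] unfolding F_def by blast
      then show "dist (the (foldr (\<circ>\<^sub>m) ls Some w)) (the (foldr (\<circ>\<^sub>m) ls Some x)) < e"
        using e by (simp add: F_def dist_commute)
    qed
    have ky: "x \<in> dom (F hs') \<and> F hs' y = F hs y"
      using key_lemma[OF R sep Hw[OF y]] yz g unfolding F_def by auto
    have kz: "x \<in> dom (F hs') \<and> F hs' z = F hs z"
      using key_lemma[OF R sep Hw[OF z]] yz g unfolding F_def by auto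
    have dy: "y \<in> dom (F hs')" "z \<in> dom (F hs')" using ky kz yz g by (auto simp: domIff)
    have "dist (the (F hs' y)) (the (F hs' z)) \<le> dist (the (F hs' x)) (the (F hs' y)) + dist (the (F hs' x)) (the (F hs' z))"
      by (metis dist_commute dist_triangle)
    also have "\<dots> \<le> e / 2 + e / 2"
      using Hz[OF y sb] Hz[OF z sb] ky dy by (intro add_mono) auto
    finally show "dist (the (g y)) (the (g z)) \<le> e" using ky kz g by simp
  qed
  show ?thesis
  proof (intro exI[of _ e] conjI e allI impI)
    fix \<mu> :: "'a measure" and x
    assume A: "prob_space \<mu> \<and> sets \<mu> = sets borel \<and>
           (AE x in \<mu>. emeasure \<mu> (bowen_ball (compacted G1 K) e x) = 0)"
    then have sets: "sets \<mu> = sets borel" by auto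
    have sp: "space \<mu> = UNIV" using sets_eq_imp_space_eq[OF sets] by simp
    from A obtain N where N: "{x \<in> space \<mu>. \<not> emeasure \<mu> (bowen_ball (compacted G1 K) e x) = 0} \<subseteq> N"
      "emeasure \<mu> N = 0" "N \<in> sets \<mu>" by (auto elim: AE_E)
    show "emeasure \<mu> (bowen_ball G1 (e / 2) x) = 0"
    proof (rule ccontr)
      assume ne: "emeasure \<mu> (bowen_ball G1 (e / 2) x) \<noteq> 0"
      then have Bm: "bowen_ball G1 (e / 2) x \<in> sets \<mu>" using emeasure_neq_0_sets by blast
      show False
      proof (cases "\<exists>y\<in>bowen_ball G1 (e / 2) x. emeasure \<mu> (bowen_ball (compacted G1 K) e y) = 0")
        case True
        then obtain y where y: "y \<in> bowen_ball G1 (e / 2) x"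
          "emeasure \<mu> (bowen_ball (compacted G1 K) e y) = 0" by auto
        have "closed (bowen_ball (compacted G1 K) e y)" using bowen_closed cpm2 by blast
        then have "bowen_ball (compacted G1 K) e y \<in> sets \<mu>" using sets by simp
        moreover have "bowen_ball G1 (e / 2) x \<subseteq> bowen_ball (compacted G1 K) e y"
          using sub[OF y(1)] by blast
        ultimately have "emeasure \<mu> (bowen_ball G1 (e / 2) x) \<le> 0"
          using emeasure_mono y(2) by metis
        then show False using ne by simp
      next
        case False
        then have "bowen_ball G1 (e / 2) x \<subseteq> N" using N(1) sp by auto
        then have "emeasure \<mu> (bowen_ball G1 (e / 2) x) \<le> 0"
          using emeasure_mono N(2,3) by metis
        then show False using ne by simp
      qed
    qed
  qed
qed

end
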